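(* Let $n\geq 6$ be even, let $k=\frac{n-2}{2}$, and let $u$ be the vertex of the friendship graph $F_k$ that is adjacent to every other vertex. Let $F_k^{u}$ be the graph obtained from $F_k$ by adding a new vertex joined by a pendant edge to $u$. Then $\rho(F^{u}_{\frac{n-2}{2}})<\sqrt{2n-4}$.
   Context: All graphs are simple and undirected. The friendship graph $F_k$ is the graph consisting of $k$ edge-disjoint triangles that all share a single common vertex. For a graph $G$ and a vertex $a$, $G^{a}$ denotes the graph obtained from $G$ by adding a new vertex and a pendant edge joining it to $a$. $\rho(G)$ denotes the spectral radius (largest adjacency eigenvalue) of $G$. *)

theory Defs
  imports Complex_Main "Jordan_Normal_Form.Char_Poly"
begin

text \<open>A finite simple graph on vertex set {0..<N} is given by a symmetric,
irreflexive edge predicate E. Its adjacency matrix is the real N x N 0/1 matrix.\<close>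

definition adj_matrix :: "nat \<Rightarrow> (nat \<Rightarrow> nat \<Rightarrow> bool) \<Rightarrow> real mat" where
  "adj_matrix N E = mat N N (\<lambda>(i,j). if E i j then 1 else 0)"

text \<open>Spectral radius = largest adjacency eigenvalue (adjacency matrices are real
symmetric, so all eigenvalues are real).\<close>
definition graph_rho :: "nat \<Rightarrow> (nat \<Rightarrow> nat \<Rightarrow> bool) \<Rightarrow> real" where
  "graph_rho N E = Max {x. eigenvalue (adj_matrix N E) x}"

text \<open>Friendship graph F_k on vertices {0..<2k+1}: centre 0 adjacent to all
others, and triangles {0, 2i-1, 2i} for i = 1..k.\<close>
definition friendship_edges :: "nat \<Rightarrow> nat \<Rightarrow> nat \<Rightarrow> bool" where
  "friendship_edges k i j \<longleftrightarrow> i < 2*k+1 \<and> j < 2*k+1 \<and> i \<noteq> j \<and>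
     (i = 0 \<or> j = 0 \<or> (i + 1) div 2 = (j + 1) div 2)"

definition add_pendant :: "nat \<Rightarrow> (nat \<Rightarrow> nat \<Rightarrow> bool) \<Rightarrow> nat \<Rightarrow> nat \<Rightarrow> nat \<Rightarrow> bool" where
  "add_pendant N E a i j \<longleftrightarrow> E i j \<or> (i = N \<and> j = a) \<or> (i = a \<and> j = N)"

end

theory Submission
  imports Defs
begin

lemma nb_sum: "(\<Sum>j\<in>{0..<N::nat}. (if P j then 1 else 0) * (w j::real)) = sum w {j\<in>{0..<N}. P j}"
  proof -
  have "(\<Sum>j\<in>{0..<N}. (if P j then 1 else 0) * (w j::real)) = (\<Sum>j\<in>{0..<N}. if P j then w j else 0)"
    by (rule sum.cong) auto
  also have "\<dots> = sum w {j\<in>{0..<N}. P j}" by (rule sum.inter_filter[symmetric]) simp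
  finally show ?thesis .
qed

lemma nb0: "k \<ge> 1 \<Longrightarrow> {j\<in>{0..<2*k+2}. add_pendant (2*k+1) (friendship_edges k) 0 0 j} = {1..<2*k+2}"
  unfolding add_pendant_def friendship_edges_def by auto

lemma nbp: "{j\<in>{0..<2*k+2}. add_pendant (2*k+1) (friendship_edges k) 0 (2*k+1) j} = {0}"
  unfolding add_pendant_def friendship_edges_def by auto

lemma nbodd: "t < k \<Longrightarrow> {j\<in>{0..<2*k+2}. add_pendant (2*k+1) (friendship_edges k) 0 (2*t+1) j} = {0, 2*t+2}"
  unfolding add_pendant_def friendship_edges_def by auto

lemma nbeven: "t < k \<Longrightarrow> {j\<in>{0..<2*k+2}. add_pendant (2*k+1) (friendship_edges k) 0 (2*t+2) j} = {0, 2*t+1}"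
  unfolding add_pendant_def friendship_edges_def by auto

lemma pairsum: "m \<le> k \<Longrightarrow> sum (w::nat\<Rightarrow>real) {1..<2*m+1} = (\<Sum>i<m. w (2*i+1) + w (2*i+2))"
proof (induction m)
  case 0 then show ?case by simp
next
  case (Suc m)
  have "{1..<2*Suc m+1} = insert (2*m+2) (insert (2*m+1) {1..<2*m+1})" by auto
  then show ?case using Suc by simp
qed

lemma cubic_pos:
  fixes x :: real and k :: nat
  assumes k: "k \<ge> 2" and x: "x \<ge> 2 * sqrt k"
  shows "x^3 - x^2 - (2*k+1)*x + 1 > 0"
proof -
  have sk: "sqrt k \<ge> 0" by simp
  have x0: "x \<ge> 0" using x sk by linarith
  have "(2 * sqrt k)^2 = 4*k" by (simp add: power_mult_distrib)
  moreover have "(2 * sqrt k)^2 \<le> x^2" using x sk by (intro power_mono) auto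
  ultimately have y: "x^2 \<ge> 4*k" by simp
  have y8: "x^2 \<ge> 8" using y k by linarith
  have x28: "x \<ge> 2.8"
  proof (rule ccontr)
    assume "\<not> x \<ge> 2.8"
    hence "x^2 < 2.8^2" using x0 by (simp add: power_strict_mono)
    thus False using y8 by (simp add: power2_eq_square)
  qed
  have d: "x^2 - 2*k - 1 \<ge> x^2/2 - 1" using y by linarith
  have "x * (x^2 - 2*k - 1) \<ge> 2.8 * (x^2/2 - 1)"
    by (rule mult_mono) (use x28 d y8 in auto)
  moreover have "x^3 = x * x^2" by (simp add: power3_eq_cube power2_eq_square)
  ultimately show ?thesis using y8 by (simp add: algebra_simps)
qed

lemma eig_eqs:
  fixes k :: nat
  defines "E \<equiv> add_pendant (2*k+1) (friendship_edges k) 0"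
  assumes ev: "eigenvector (adj_matrix (2*k+2) E) v x" and i: "i < 2*k+2"
  shows "x * v$i = sum (\<lambda>j. v$j) {j\<in>{0..<2*k+2}. E i j}"
proof -
  let ?A = "adj_matrix (2*k+2) E"
  have dr: "dim_row ?A = 2*k+2" "dim_col ?A = 2*k+2" by (auto simp: adj_matrix_def)
  from ev have v: "v \<in> carrier_vec (2*k+2)" and eq: "?A *\<^sub>v v = x \<cdot>\<^sub>v v"
    unfolding eigenvector_def dr by auto
  have "(?A *\<^sub>v v) $ i = x * v$i" using eq v i by (simp add: eq)
  moreover have "(?A *\<^sub>v v) $ i = (\<Sum>j\<in>{0..<2*k+2}. (if E i j then 1 else 0) * v$j)"
    using v i dr by (simp add: scalar_prod_def adj_matrix_def)
  ultimately show ?thesis using nb_sum[where N="2*k+2" and P="E i" and w="\<lambda>j. v$j"] by simp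
qed

lemma eig_bound:
  fixes k :: nat
  assumes k: "k \<ge> 2" and ev: "eigenvalue (adj_matrix (2*k+2) (add_pendant (2*k+1) (friendship_edges k) 0)) x"
  shows "x < 2 * sqrt k"
proof (rule ccontr)
  assume "\<not> x < 2 * sqrt k"
  hence xb: "x \<ge> 2 * sqrt k" by simp
  have "sqrt (real k) \<ge> sqrt 2" using k by simp
  moreover have "sqrt (2::real) > 1" by simp
  ultimately have x1: "x > 2" using xb by linarith
  from ev obtain v where evv: "eigenvector (adj_matrix (2*k+2) (add_pendant (2*k+1) (friendship_edges k) 0)) v x"
    unfolding eigenvalue_def by auto
  define w where "w = (\<lambda>j. v$j)"
  have k1: "k \<ge> 1" using k by simp
  note eq = eig_eqs[OF evv, folded w_def]
  have e0: "x * w 0 = sum w {1..<2*k+2}" using eq[of 0] nb0[OF k1] unfolding w_def by simp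
  have ep: "x * w (2*k+1) = w 0" using eq[of "2*k+1"] nbp[of k] unfolding w_def by simp
  have eo: "x * w (2*t+1) = w 0 + w (2*t+2)" if "t < k" for t
    using eq[of "2*t+1"] nbodd[OF that] that unfolding w_def by simp
  have ee: "x * w (2*t+2) = w 0 + w (2*t+1)" if "t < k" for t
    using eq[of "2*t+2"] nbeven[OF that] that unfolding w_def by simp
  define S where "S = sum w {1..<2*k+1}"
  have S: "S = (\<Sum>i<k. w (2*i+1) + w (2*i+2))" unfolding S_def by (rule pairsum[of k k]) simp
  have "(x - 1) * S = (\<Sum>i<k. (x-1) * (w (2*i+1) + w (2*i+2)))" unfolding S by (simp add: sum_distrib_left)
  also have "\<dots> = (\<Sum>i<k. 2 * w 0)"
    by (rule sum.cong) (use eo ee in \<open>auto simp: algebra_simps\<close>)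
  finally have hS: "(x - 1) * S = 2 * k * w 0" by simp
  have "{1..<2*k+2} = insert (2*k+1) {1..<2*k+1}" by auto
  hence e0': "x * w 0 = S + w (2*k+1)" using e0 unfolding S_def by simp
  have "x * x * (x - 1) * w 0 = x * (x-1) * S + (x - 1) * (x * w (2*k+1))" using e0' by (simp add: algebra_simps)
  also have "\<dots> = x * (2*k*w 0) + (x-1) * w 0" using hS ep by simp
  finally have "(x^3 - x^2 - (2*k+1)*x + 1) * w 0 = 0" by (simp add: algebra_simps power3_eq_cube power2_eq_square)
  with cubic_pos[OF k xb] have w0: "w 0 = 0" by simp
  have wp: "w (2*k+1) = 0" using ep w0 x1 by simp
  have wpair: "w (2*t+1) = 0 \<and> w (2*t+2) = 0" if "t < k" for t
  proof -
    have a: "x * w (2*t+1) = w (2*t+2)" "x * w (2*t+2) = w (2*t+1)" using eo[OF that] ee[OF that] w0 by auto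
    hence "x * x * w (2*t+1) = w (2*t+1)" by (metis mult.assoc)
    hence "(x*x - 1) * w (2*t+1) = 0" by (simp add: algebra_simps)
    moreover have "x*x - 1 \<noteq> 0" using x1 by (smt (verit) mult_le_cancel_left1)
    ultimately have "w (2*t+1) = 0" by simp
    with a show ?thesis by simp
  qed
  have allz: "w i = 0" if "i < 2*k+2" for i
  proof -
    show ?thesis
    proof (cases "i = 0 \<or> i = 2*k+1")
      case True then show ?thesis using w0 wp by auto
    next
      case False
      show ?thesis
      proof (cases "odd i")
        case True
        define t where "t = (i - 1) div 2"
        have "i = 2*t+1" "t < k" using True False that unfolding t_def by (auto elim!: oddE)
        then show ?thesis using wpair by auto
      next
        case ev2: False
        define t where "t = i div 2 - 1"
        have "i = 2*t+2" "t < k" using ev2 False that unfolding t_def by (auto elim!: evenE)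
        then show ?thesis using wpair by auto
      qed
    qed
  qed
  have dr: "dim_row (adj_matrix (2*k+2) (add_pendant (2*k+1) (friendship_edges k) 0)) = 2*k+2"
    by (simp add: adj_matrix_def)
  from evv have "v \<in> carrier_vec (2*k+2)" "v \<noteq> 0\<^sub>v (2*k+2)" unfolding eigenvector_def dr by auto
  moreover have "v = 0\<^sub>v (2*k+2)" using calculation(1) allz unfolding w_def by (intro eq_vecI) auto
  ultimately show False by simp
qed

lemma mult_adj:
  assumes v: "v \<in> carrier_vec N" and i: "i < N"
  shows "(adj_matrix N E *\<^sub>v v) $ i = sum (\<lambda>j. v$j) {j\<in>{0..<N}. E i j}"
proof -
  have "(adj_matrix N E *\<^sub>v v) $ i = (\<Sum>j\<in>{0..<N}. (if E i j then 1 else 0) * v$j)"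
    using v i by (simp add: scalar_prod_def adj_matrix_def)
  then show ?thesis using nb_sum[where N="N" and P="E i" and w="\<lambda>j. v$j"] by simp
qed

lemma eig_m1:
  fixes k :: nat
  assumes k: "k \<ge> 1"
  shows "eigenvalue (adj_matrix (2*k+2) (add_pendant (2*k+1) (friendship_edges k) 0)) (-1)"
proof -
  define N where "N = 2*k+2"
  define E where "E = add_pendant (2*k+1) (friendship_edges k) 0"
  define v :: "real vec" where "v = vec N (\<lambda>j. if j = 1 then 1 else if j = 2 then -1 else 0)"
  have vc: "v \<in> carrier_vec N" unfolding v_def by simp
  have v0: "v \<noteq> 0\<^sub>v N"
  proof
    assume "v = 0\<^sub>v N"
    hence "v $ 1 = 0" using k unfolding N_def by simp
    thus False using k unfolding v_def N_def by simp
  qed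
  have vv: "v $ j = (if j = 1 then 1 else if j = 2 then -1 else 0)" if "j < N" for j
    using that unfolding v_def by simp
  have row: "(adj_matrix N E *\<^sub>v v) $ i = (-1) * v $ i" if i: "i < N" for i
  proof -
    have m: "(adj_matrix N E *\<^sub>v v) $ i = sum (\<lambda>j. v$j) {j\<in>{0..<N}. E i j}"
      by (rule mult_adj[OF vc i])
    show ?thesis
    proof (cases "i = 0 \<or> i = 2*k+1")
      case True
      then show ?thesis
      proof
        assume i0: "i = 0"
        have "sum (\<lambda>j. v$j) {1, 2} = sum (\<lambda>j. v$j) {1..<2*k+2}"
          by (rule sum.mono_neutral_left) (use k vv in \<open>auto simp: N_def\<close>)
        moreover have "sum (\<lambda>j. v$j) {1, 2} = 0" using vv k unfolding N_def by simp
        ultimately show ?thesis using m i0 nb0[OF k] vv[of 0] k unfolding E_def N_def by simp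
      next
        assume ip: "i = 2*k+1"
        show ?thesis using m ip nbp[of k] vv[of 0] vv[of i] k i unfolding E_def N_def by simp
      qed
    next
      case False
      show ?thesis
      proof (cases "odd i")
        case True
        define t where "t = (i - 1) div 2"
        have it: "i = 2*t+1" "t < k" using True False that unfolding t_def N_def by (auto elim!: oddE)
        show ?thesis using m it nbodd[OF it(2)] vv[of 0] vv[of i] vv[of "2*t+2"] i
          unfolding E_def N_def by (cases "t = 0") auto
      next
        case ev2: False
        define t where "t = i div 2 - 1"
        have it: "i = 2*t+2" "t < k" using ev2 False that unfolding t_def N_def by (auto elim!: evenE)
        show ?thesis using m it nbeven[OF it(2)] vv[of 0] vv[of i] vv[of "2*t+1"] i
          unfolding E_def N_def by (cases "t = 0") auto
      qed
    qed
  qed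
  have "adj_matrix N E *\<^sub>v v = (-1) \<cdot>\<^sub>v v"
    by (rule eq_vecI) (use row vc in \<open>auto simp: adj_matrix_def\<close>)
  moreover have "dim_row (adj_matrix N E) = N" by (simp add: adj_matrix_def)
  ultimately have "eigenvector (adj_matrix N E) v (-1)" using vc v0 unfolding eigenvector_def by simp
  thus ?thesis unfolding eigenvalue_def N_def E_def by blast
qed

lemma fin_eig:
  "finite {x::real. eigenvalue (adj_matrix N E) x}"
proof -
  have A: "adj_matrix N E \<in> carrier_mat N N" by (simp add: adj_matrix_def)
  have "char_poly (adj_matrix N E) \<noteq> 0" using degree_monic_char_poly[OF A] by auto
  hence "finite {x. poly (char_poly (adj_matrix N E)) x = 0}" by (rule poly_roots_finite)
  thus ?thesis using eigenvalue_root_char_poly[OF A] by simp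
qed

theorem lemma2p5:
  fixes n k :: nat
  assumes "even n" and "n \<ge> 6" and "k = (n - 2) div 2"
  shows "graph_rho (2*k+2) (add_pendant (2*k+1) (friendship_edges k) 0)
           < sqrt (2 * real n - 4)"
proof -
  have k: "k \<ge> 2" using assms by simp
  have "n = 2*k+2" using assms by (auto elim!: evenE)
  hence nk: "2 * real n - 4 = 4 * k" by simp
  have sq: "sqrt (2 * real n - 4) = 2 * sqrt k" unfolding nk by (simp add: real_sqrt_mult)
  show ?thesis unfolding graph_rho_def sq
    using fin_eig eig_m1[of k] eig_bound[OF k] k by (subst Max_less_iff) auto
qed

end
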